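(* Let $P$ be a codirected poset and $M\colon P\to\mathbf{Vec}$ a pointwise finite-dimensional persistence module with $M_p\neq 0$ for all $p\in P$ and such that $M(p\le q)\colon M_p\to M_q$ is injective for all $p\le q$. Then there is a monomorphism $k_P\hookrightarrow M$. If moreover $P$ is directed, then $M$ has a direct summand isomorphic to $k_P$.
   Context: $P$ is codirected if for all $p,q\in P$ there is $c\in P$ with $c\le p,q$; directed if for all $p,q$ there is $c$ with $p,q\le c$. Persistence modules over $P$ are functors $P\to\mathbf{Vec}$ with structure maps $M(p\le q)$. $k_P$ is the module with $k$ at every point and identity structure maps. A monomorphism is a pointwise injective morphism. *)

theory Defs
  imports Main "HOL.Vector_Spaces"
begin

text \<open>Vector spaces over a field 'k are modelled as subspaces V of an ambient
 vector space 'v with scalar multiplication s (locale vector_space).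
 A persistence module over the poset 'p is a family of subspaces V p together
 with structure maps f p q (only their behaviour on V p matters).\<close>

definition lin_on :: "('k \<Rightarrow> 'v::plus \<Rightarrow> 'v) \<Rightarrow> ('k \<Rightarrow> 'w::plus \<Rightarrow> 'w) \<Rightarrow> 'v set
    \<Rightarrow> ('v \<Rightarrow> 'w) \<Rightarrow> bool" where
  "lin_on s1 s2 A h \<longleftrightarrow>
     (\<forall>x\<in>A. \<forall>y\<in>A. h (x + y) = h x + h y) \<and> (\<forall>c. \<forall>x\<in>A. h (s1 c x) = s2 c (h x))"

definition pmod :: "('k::field \<Rightarrow> 'v::ab_group_add \<Rightarrow> 'v) \<Rightarrow> ('p::order \<Rightarrow> 'v set)
    \<Rightarrow> ('p \<Rightarrow> 'p \<Rightarrow> 'v \<Rightarrow> 'v) \<Rightarrow> bool" where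
  "pmod s V f \<longleftrightarrow> vector_space s \<and> (\<forall>p. module.subspace s (V p))
     \<and> (\<forall>p q. p \<le> q \<longrightarrow> lin_on s s (V p) (f p q) \<and> f p q ` V p \<subseteq> V q)
     \<and> (\<forall>p. \<forall>x\<in>V p. f p p x = x)
     \<and> (\<forall>p q r. p \<le> q \<longrightarrow> q \<le> r \<longrightarrow> (\<forall>x\<in>V p. f q r (f p q x) = f p r x))"

definition pfd :: "('k::field \<Rightarrow> 'v::ab_group_add \<Rightarrow> 'v) \<Rightarrow> ('p \<Rightarrow> 'v set) \<Rightarrow> bool" where
  "pfd s V \<longleftrightarrow> (\<forall>p. \<exists>B. finite B \<and> B \<subseteq> V p \<and> module.span s B = V p)"

definition pmor :: "('k::field \<Rightarrow> 'v::ab_group_add \<Rightarrow> 'v) \<Rightarrow> ('p::order \<Rightarrow> 'v set)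
    \<Rightarrow> ('p \<Rightarrow> 'p \<Rightarrow> 'v \<Rightarrow> 'v) \<Rightarrow> ('k \<Rightarrow> 'w::ab_group_add \<Rightarrow> 'w) \<Rightarrow> ('p \<Rightarrow> 'w set)
    \<Rightarrow> ('p \<Rightarrow> 'p \<Rightarrow> 'w \<Rightarrow> 'w) \<Rightarrow> ('p \<Rightarrow> 'v \<Rightarrow> 'w) \<Rightarrow> bool" where
  "pmor s1 V1 f1 s2 V2 f2 \<eta> \<longleftrightarrow>
     (\<forall>p. lin_on s1 s2 (V1 p) (\<eta> p) \<and> \<eta> p ` V1 p \<subseteq> V2 p)
     \<and> (\<forall>p q. p \<le> q \<longrightarrow> (\<forall>x\<in>V1 p. \<eta> q (f1 p q x) = f2 p q (\<eta> p x)))"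

definition pmono where
  "pmono s1 V1 f1 s2 V2 f2 \<eta> \<longleftrightarrow>
     pmor s1 V1 f1 s2 V2 f2 \<eta> \<and> (\<forall>p. inj_on (\<eta> p) (V1 p))"

definition kP_space :: "'p \<Rightarrow> 'k::field set" where "kP_space p = UNIV"
definition kP_map :: "'p \<Rightarrow> 'p \<Rightarrow> 'k::field \<Rightarrow> 'k" where "kP_map p q = id"

definition piso where
  "piso s1 V1 f1 s2 V2 f2 \<eta> \<longleftrightarrow>
     pmor s1 V1 f1 s2 V2 f2 \<eta> \<and> (\<forall>p. bij_betw (\<eta> p) (V1 p) (V2 p))"

definition psubmod where
  "psubmod s V f L \<longleftrightarrow> (\<forall>p. module.subspace s (L p) \<and> L p \<subseteq> V p)
     \<and> (\<forall>p q. p \<le> q \<longrightarrow> f p q ` L p \<subseteq> L q)"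

definition pdirect_summand where
  "pdirect_summand s V f L \<longleftrightarrow> psubmod s V f L \<and>
     (\<exists>N. psubmod s V f N \<and> (\<forall>p. L p \<inter> N p = {0} \<and> {x + y |x y. x \<in> L p \<and> y \<in> N p} = V p))"

definition codirected :: "'p::order itself \<Rightarrow> bool" where
  "codirected _ \<longleftrightarrow> (\<forall>p q::'p. \<exists>c. c \<le> p \<and> c \<le> q)"

definition directed :: "'p::order itself \<Rightarrow> bool" where
  "directed _ \<longleftrightarrow> (\<forall>p q::'p. \<exists>c. p \<le> c \<and> q \<le> c)"

end

theory Submission
  imports Defs
begin

definition Nof :: "('p \<times> 'v) set \<Rightarrow> 'p \<Rightarrow> 'v set" where
  "Nof G p = {y. (p, y) \<in> G}"

context vector_space begin

lemma subspace_plus_line: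
  assumes "subspace N"
  shows "subspace {n + scale a z | a n. n \<in> N}"
  unfolding subspace_def
proof (intro conjI ballI allI)
  show "0 \<in> {n + scale a z | a n. n \<in> N}"
    using subspace_0[OF assms] by (intro CollectI exI[of _ 0] exI[of _ 0]) auto
next
  fix u w assume "u \<in> {n + scale a z | a n. n \<in> N}" "w \<in> {n + scale a z | a n. n \<in> N}"
  then obtain a1 n1 a2 n2 where "u = n1 + scale a1 z" "n1 \<in> N" "w = n2 + scale a2 z" "n2 \<in> N" by blast
  moreover have "u + w = (n1 + n2) + scale (a1 + a2) z" using calculation by (simp add: scale_left_distrib algebra_simps)
  ultimately show "u + w \<in> {n + scale a z | a n. n \<in> N}" using subspace_add[OF assms] by blast
next
  fix c u assume "u \<in> {n + scale a z | a n. n \<in> N}"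
  then obtain a n where "u = n + scale a z" "n \<in> N" by blast
  moreover have "scale c u = scale c n + scale (c * a) z" using calculation by (simp add: scale_right_distrib)
  ultimately show "scale c u \<in> {n + scale a z | a n. n \<in> N}" using subspace_scale[OF assms] by blast
qed


lemma fin_basis:
  assumes "subspace U" "finite F" "F \<subseteq> U" "span F = U"
  obtains B where "B \<subseteq> U" "independent B" "span B = U" "finite B" "card B = dim U"
proof -
  obtain B where B: "B \<subseteq> U" "independent B" "U \<subseteq> span B" "card B = dim U"
    using basis_exists by blast
  have "span B = U" using B assms(1) span_minimal span_mono span_span
    by (metis subset_antisym span_subspace)
  moreover have "finite B" using independent_span_bound[OF assms(2) B(2)] B(1) assms(4) by auto
  ultimately show ?thesis using B that by auto
qed

lemma lin_on_zero:
  assumes "lin_on scale scale U h" "0 \<in> U"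
  shows "h 0 = 0"
proof -
  have "h (0 + 0) = h 0 + h 0" using assms unfolding lin_on_def by blast
  thus ?thesis by simp
qed

lemma inj_dim_surj:
  assumes U: "subspace U" and W: "subspace W" and FU: "finite FU" "FU \<subseteq> U" "span FU = U"
    and FW: "finite FW" "FW \<subseteq> W" "span FW = W"
    and h: "lin_on scale scale U h" "h ` U \<subseteq> W" "inj_on h U"
    and d: "dim W \<le> dim U"
  shows "h ` U = W"
proof -
  interpret vp: vector_space_pair scale scale by unfold_locales
  obtain B where B: "B \<subseteq> U" "independent B" "span B = U" "finite B" "card B = dim U"
    using fin_basis[OF U FU] by blast
  obtain BW where BW: "BW \<subseteq> W" "independent BW" "span BW = W" "finite BW" "card BW = dim W"
    using fin_basis[OF W FW] by blast
  obtain g where g: "Vector_Spaces.linear scale scale g" "\<forall>x\<in>B. g x = h x"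
    using vp.linear_independent_extend[OF B(2)] by blast
  interpret lg: Vector_Spaces.linear scale scale g by fact
  have h0: "h 0 = 0" using lin_on_zero[OF h(1) subspace_0[OF U]] .
  have "subspace {x\<in>U. g x = h x}"
    unfolding subspace_def using U h(1) h0
    by (auto simp: subspace_add subspace_scale lg.add lg.scale lin_on_def subspace_0)
  then have "span B \<subseteq> {x\<in>U. g x = h x}" using g(2) B(1) by (intro span_minimal) auto
  then have eq: "\<forall>x\<in>U. g x = h x" using B(3) by auto
  have gU: "g ` U = h ` U" using eq by (auto simp: image_def)
  have inj: "inj_on g (span B)" using h(3) eq B(3) inj_on_cong by metis
  have ind: "independent (g ` B)" using lg.independent_injective_image[OF B(2) inj] .
  have cgb: "card (g ` B) = dim U" using card_image inj_on_subset[OF inj span_superset] B(5) by metis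
  have sp: "span (g ` B) = h ` U" using lg.span_image B(3) gU by simp
  show ?thesis
  proof (rule ccontr)
    assume "h ` U \<noteq> W"
    then obtain w where w: "w \<in> W" "w \<notin> h ` U" using h(2) by blast
    have i2: "independent (insert w (g ` B))" using independent_insertI ind w sp by auto
    have "insert w (g ` B) \<subseteq> span BW" using BW(3) w(1) h(2) gU B(1) by blast
    from independent_span_bound[OF BW(4) i2 this]
    have "card (insert w (g ` B)) \<le> dim W" using BW(5) by simp
    moreover have "card (insert w (g ` B)) = Suc (dim U)"
      using cgb w sp B(4) span_superset by (metis card_insert_disjoint finite_imageI subsetD)
    ultimately show False using d by simp
  qed
qed

end

context
  fixes s :: "'k::field \<Rightarrow> 'v::ab_group_add \<Rightarrow> 'v" and V :: "'p::order \<Rightarrow> 'v set"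
    and f :: "'p \<Rightarrow> 'p \<Rightarrow> 'v \<Rightarrow> 'v"
  assumes cod: "codirected TYPE('p)" and pm: "pmod s V f" and fd: "pfd s V"
    and nz: "\<forall>p. V p \<noteq> {0}" and inj: "\<forall>p q. p \<le> q \<longrightarrow> inj_on (f p q) (V p)"
begin

interpretation vs: vector_space s using pm by (simp add: pmod_def)

lemma sub: "vs.subspace (V p)" using pm by (simp add: pmod_def)
lemma lin: "p \<le> q \<Longrightarrow> lin_on s s (V p) (f p q)" using pm by (simp add: pmod_def)
lemma maps: "p \<le> q \<Longrightarrow> x \<in> V p \<Longrightarrow> f p q x \<in> V q" using pm unfolding pmod_def by blast
lemma fid: "x \<in> V p \<Longrightarrow> f p p x = x" using pm by (simp add: pmod_def)
lemma fcomp: "p \<le> q \<Longrightarrow> q \<le> r \<Longrightarrow> x \<in> V p \<Longrightarrow> f q r (f p q x) = f p r x"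
  using pm by (simp add: pmod_def)
lemma fadd: "p \<le> q \<Longrightarrow> x \<in> V p \<Longrightarrow> y \<in> V p \<Longrightarrow> f p q (x + y) = f p q x + f p q y"
  using lin unfolding lin_on_def by blast
lemma fscale: "p \<le> q \<Longrightarrow> x \<in> V p \<Longrightarrow> f p q (s c x) = s c (f p q x)"
  using lin unfolding lin_on_def by blast
lemma fzero: "p \<le> q \<Longrightarrow> f p q 0 = 0"
  using vs.lin_on_zero[OF lin vs.subspace_0[OF sub]] .
lemma finj: "p \<le> q \<Longrightarrow> x \<in> V p \<Longrightarrow> y \<in> V p \<Longrightarrow> f p q x = f p q y \<Longrightarrow> x = y"
  using inj by (meson inj_on_def)
lemma below: "\<exists>c. c \<le> p \<and> c \<le> (q::'p)" using cod by (simp add: codirected_def)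

lemma exists_family: "\<exists>x. (\<forall>p. x p \<in> V p \<and> x p \<noteq> 0) \<and> (\<forall>p q. p \<le> q \<longrightarrow> f p q (x p) = x q)"
proof -
  obtain p0 where p0: "\<forall>p. vs.dim (V p0) \<le> vs.dim (V p)"
    using ex_has_least_nat[of "\<lambda>_. True" undefined "\<lambda>p. vs.dim (V p)"] by auto
  have surj: "f c p0 ` V c = V p0" if "c \<le> p0" for c
  proof -
    obtain FU where "finite FU" "FU \<subseteq> V c" "vs.span FU = V c" using fd unfolding pfd_def by blast
    moreover obtain FW where "finite FW" "FW \<subseteq> V p0" "vs.span FW = V p0" using fd unfolding pfd_def by blast
    ultimately show ?thesis
      using vs.inj_dim_surj[OF sub sub, where FU=FU and FW=FW and h="f c p0"] lin[OF that] maps[OF that] inj that p0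
      by blast
  qed
  obtain v where v: "v \<in> V p0" "v \<noteq> 0" using nz vs.subspace_0[OF sub] by blast
  define g where "g c = the_inv_into (V c) (f c p0) v" for c
  have g: "g c \<in> V c \<and> f c p0 (g c) = v" if "c \<le> p0" for c
    using the_inv_into_into[of "f c p0" "V c" v "V c"] f_the_inv_into_f[of "f c p0" "V c" v]
      inj surj[OF that] v that unfolding g_def by auto
  have gu: "g c = y" if "c \<le> p0" "y \<in> V c" "f c p0 y = v" for c y
    using the_inv_into_f_eq[of "f c p0" "V c" y v] inj that unfolding g_def by auto
  have gd: "g c = f d c (g d)" if "d \<le> c" "c \<le> p0" for c d
  proof -
    have "d \<le> p0" using that by auto
    thus ?thesis using gu[OF that(2) maps[OF that(1)]] g fcomp that by metis
  qed
  have wd: "f c p (g c) = f c' p (g c')" if "c \<le> p" "c \<le> p0" "c' \<le> p" "c' \<le> p0" for c c' p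
  proof -
    obtain d where d: "d \<le> c" "d \<le> c'" using below by blast
    have "d \<le> p0" using d that by auto
    have "f c p (g c) = f d p (g d)" using gd[OF d(1) that(2)] fcomp[OF d(1) that(1)] g[OF \<open>d \<le> p0\<close>] by simp
    moreover have "f c' p (g c') = f d p (g d)" using gd[OF d(2) that(4)] fcomp[OF d(2) that(3)] g[OF \<open>d \<le> p0\<close>] by simp
    ultimately show ?thesis by simp
  qed
  define cp where "cp p = (SOME c. c \<le> p \<and> c \<le> p0)" for p
  have cp: "cp p \<le> p \<and> cp p \<le> p0" for p
    unfolding cp_def using below[of p p0] by (rule someI_ex)
  define x where "x p = f (cp p) p (g (cp p))" for p
  have key: "x p = f c p (g c)" if "c \<le> p" "c \<le> p0" for c p
    unfolding x_def using wd[OF cp[THEN conjunct1] cp[THEN conjunct2] that] .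
  show ?thesis
  proof (intro exI conjI allI impI)
    fix p
    show "x p \<in> V p" unfolding x_def using maps cp g by blast
    show "x p \<noteq> 0"
    proof
      assume "x p = 0"
      hence "f (cp p) p (g (cp p)) = f (cp p) p 0" using fzero cp unfolding x_def by simp
      hence "g (cp p) = 0" using finj cp g vs.subspace_0[OF sub] by blast
      thus False using g[of "cp p"] cp fzero v by force
    qed
  next
    fix p q :: 'p assume pq: "p \<le> q"
    have c: "cp p \<le> q" using cp pq by (blast intro: order_trans)
    show "f p q (x p) = x q"
      using key[OF c cp[THEN conjunct2]] fcomp[OF cp[THEN conjunct1] pq] g cp unfolding x_def by metis
  qed
qed


lemma part1:
  assumes xV: "\<forall>p. x p \<in> V p \<and> x p \<noteq> 0" and xc: "\<forall>p q. p \<le> q \<longrightarrow> f p q (x p) = x q"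
  shows "pmono (*) kP_space kP_map s V f (\<lambda>p a. s a (x p))"
  unfolding pmono_def pmor_def lin_on_def kP_space_def kP_map_def
  using xV xc by (auto simp: vs.scale_left_distrib vs.scale_scale vs.subspace_scale[OF sub] fscale
      inj_on_def)

lemma Lsubmod:
  assumes xV: "\<forall>p. x p \<in> V p \<and> x p \<noteq> 0" and xc: "\<forall>p q. p \<le> q \<longrightarrow> f p q (x p) = x q"
  shows "psubmod s V f (\<lambda>p. range (\<lambda>a. s a (x p)))"
  unfolding psubmod_def
proof (intro conjI allI impI)
  fix p show "vs.subspace (range (\<lambda>a. s a (x p)))" using vs.span_singleton vs.subspace_span by metis
  show "range (\<lambda>a. s a (x p)) \<subseteq> V p" using xV vs.subspace_scale[OF sub] by auto
next
  fix p q :: 'p assume "p \<le> q"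
  thus "f p q ` range (\<lambda>a. s a (x p)) \<subseteq> range (\<lambda>a. s a (x q))" using xV xc fscale by auto
qed

lemma Liso:
  assumes xV: "\<forall>p. x p \<in> V p \<and> x p \<noteq> 0" and xc: "\<forall>p q. p \<le> q \<longrightarrow> f p q (x p) = x q"
  shows "piso (*) kP_space kP_map s (\<lambda>p. range (\<lambda>a. s a (x p))) f (\<lambda>p a. s a (x p))"
  unfolding piso_def pmor_def lin_on_def kP_space_def kP_map_def bij_betw_def
  using xV xc by (auto simp: vs.scale_left_distrib vs.scale_scale fscale inj_on_def)


lemma chain_ub:
  assumes xV: "\<forall>p. x p \<in> V p \<and> x p \<noteq> 0"
    and A: "A = {G. psubmod s V f (Nof G) \<and> (\<forall>p. Nof G p \<inter> range (\<lambda>a. s a (x p)) = {0})}"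
    and C: "C \<in> chains A"
  shows "\<exists>U\<in>A. \<forall>X\<in>C. X \<subseteq> U"
proof (cases "C = {}")
  case True
  define Z where "Z = {(p::'p, 0::'v) | p. True}"
  have NZ: "Nof Z p = {0}" for p unfolding Z_def Nof_def by blast
  have "Z \<in> A" unfolding A psubmod_def mem_Collect_eq NZ
  proof (intro conjI allI impI)
    fix p q :: 'p
    show "vs.subspace {0}" by (rule vs.subspace_single_0)
    show "{0} \<subseteq> V p" using vs.subspace_0[OF sub] by simp
    show "p \<le> q \<Longrightarrow> f p q ` {0} \<subseteq> {0}" using fzero by simp
    have "(0::'v) = s 0 (x p)" by simp
    hence "0 \<in> range (\<lambda>a. s a (x p))" by blast
    thus "{0} \<inter> range (\<lambda>a. s a (x p)) = {0}" by blast
  qed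
  thus ?thesis using True by blast
next
  case False
  have CA: "C \<subseteq> A" using chainsD2[OF C] .
  have ch: "\<forall>G1\<in>C. \<forall>G2\<in>C. G1 \<subseteq> G2 \<or> G2 \<subseteq> G1"
    using chainsD[OF C] by blast
  have NU: "Nof (\<Union>C) p = (\<Union>G\<in>C. Nof G p)" for p unfolding Nof_def by blast
  have mono: "G1 \<subseteq> G2 \<Longrightarrow> Nof G1 p \<subseteq> Nof G2 p" for G1 G2 p unfolding Nof_def by blast
  have GA: "G \<in> C \<Longrightarrow> psubmod s V f (Nof G) \<and> (\<forall>p. Nof G p \<inter> range (\<lambda>a. s a (x p)) = {0})" for G
    using CA unfolding A by blast
  obtain G0 where G0: "G0 \<in> C" using False by auto
  have sG1: "vs.subspace (Nof G p)" if "G \<in> C" for G p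
    using GA[OF that] unfolding psubmod_def by simp
  have sG2: "Nof G p \<subseteq> V p" if "G \<in> C" for G p
    using GA[OF that] unfolding psubmod_def by simp
  have sG3: "f q r ` Nof G q \<subseteq> Nof G r" if "G \<in> C" "q \<le> r" for G q r
    using GA[OF that(1)] that(2) unfolding psubmod_def by simp
  have sG4: "Nof G p \<inter> range (\<lambda>a. s a (x p)) = {0}" if "G \<in> C" for G p
    using GA[OF that] by simp
  note sG = sG1 sG2 sG3 sG4
  have "\<Union>C \<in> A" unfolding A
  proof (intro CollectI conjI allI)
    show "psubmod s V f (Nof (\<Union>C))" unfolding psubmod_def NU
    proof (intro conjI allI impI)
      fix p
      show "vs.subspace (\<Union>G\<in>C. Nof G p)" unfolding vs.subspace_def
      proof (intro conjI ballI allI)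
        have "0 \<in> Nof G0 p" using vs.subspace_0[OF sG(1)[OF G0]] .
        thus "0 \<in> (\<Union>G\<in>C. Nof G p)" by (rule UN_I[OF G0])
      next
        fix u w assume u: "u \<in> (\<Union>G\<in>C. Nof G p)" and w: "w \<in> (\<Union>G\<in>C. Nof G p)"
        from u obtain G1 where G1: "G1 \<in> C" "u \<in> Nof G1 p" by (rule UN_E)
        from w obtain G2 where G2: "G2 \<in> C" "w \<in> Nof G2 p" by (rule UN_E)
        show "u + w \<in> (\<Union>G\<in>C. Nof G p)"
        proof (cases "G1 \<subseteq> G2")
          case True
          have "u \<in> Nof G2 p" by (rule subsetD[OF mono[OF True] G1(2)])
          hence "u + w \<in> Nof G2 p" by (rule vs.subspace_add[OF sG(1)[OF G2(1)] _ G2(2)])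
          thus ?thesis by (rule UN_I[OF G2(1)])
        next
          case False
          hence le: "G2 \<subseteq> G1" using chainsD[OF C G1(1) G2(1)] by simp
          have "w \<in> Nof G1 p" by (rule subsetD[OF mono[OF le] G2(2)])
          hence "u + w \<in> Nof G1 p" by (rule vs.subspace_add[OF sG(1)[OF G1(1)] G1(2)])
          thus ?thesis by (rule UN_I[OF G1(1)])
        qed
      next
        fix c u assume "u \<in> (\<Union>G\<in>C. Nof G p)"
        then obtain G1 where G1: "G1 \<in> C" "u \<in> Nof G1 p" by (rule UN_E)
        have "s c u \<in> Nof G1 p" by (rule vs.subspace_scale[OF sG(1)[OF G1(1)] G1(2)])
        thus "s c u \<in> (\<Union>G\<in>C. Nof G p)" by (rule UN_I[OF G1(1)])
      qed
      show "(\<Union>G\<in>C. Nof G p) \<subseteq> V p" using sG(2) by blast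
    next
      fix p q :: 'p assume pq: "p \<le> q"
      show "f p q ` (\<Union>G\<in>C. Nof G p) \<subseteq> (\<Union>G\<in>C. Nof G q)"
      proof
        fix y assume "y \<in> f p q ` (\<Union>G\<in>C. Nof G p)"
        then obtain G u where "G \<in> C" "u \<in> Nof G p" "y = f p q u" by blast
        thus "y \<in> (\<Union>G\<in>C. Nof G q)" using sG(3)[OF _ pq] by blast
      qed
    qed
  next
    fix p
    have "0 \<in> Nof G0 p" using vs.subspace_0[OF sG(1)[OF G0]] .
    moreover have "0 \<in> range (\<lambda>a. s a (x p))" using vs.scale_zero_left by (metis rangeI)
    moreover have "(\<Union>G\<in>C. Nof G p) \<inter> range (\<lambda>a. s a (x p)) \<subseteq> {0}"
      using sG(4) by blast
    ultimately show "Nof (\<Union>C) p \<inter> range (\<lambda>a. s a (x p)) = {0}"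
      unfolding NU using G0 by blast
  qed
  thus ?thesis by blast
qed


lemma part2:
  assumes xV: "\<forall>p. x p \<in> V p \<and> x p \<noteq> 0" and xc: "\<forall>p q. p \<le> q \<longrightarrow> f p q (x p) = x q"
    and dir: "directed TYPE('p)"
  shows "pdirect_summand s V f (\<lambda>p. range (\<lambda>a. s a (x p)))"
proof -
  define L where "L p = range (\<lambda>a. s a (x p))" for p
  define A where "A = {G. psubmod s V f (Nof G) \<and> (\<forall>p. Nof G p \<inter> range (\<lambda>a. s a (x p)) = {0})}"
  have "\<exists>M\<in>A. \<forall>X\<in>A. M \<subseteq> X \<longrightarrow> X = M"
    by (rule Zorn_Lemma2) (use chain_ub[OF xV A_def] in blast)
  then obtain M where MA: "M \<in> A" and Mmax: "\<And>X. X \<in> A \<Longrightarrow> M \<subseteq> X \<Longrightarrow> X = M" by blast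
  define N where "N = Nof M"
  have Nsub: "psubmod s V f N" and NL: "\<And>p. N p \<inter> L p = {0}"
    using MA unfolding A_def N_def L_def by auto
  have Ns: "vs.subspace (N p)" for p using Nsub unfolding psubmod_def by simp
  have NV: "N p \<subseteq> V p" for p using Nsub unfolding psubmod_def by simp
  have Nf: "p \<le> q \<Longrightarrow> w \<in> N p \<Longrightarrow> f p q w \<in> N q" for p q w using Nsub unfolding psubmod_def by blast
  have xVp: "x p \<in> V p" for p using xV by simp
  have xnz: "x p \<noteq> 0" for p using xV by simp
  have sxV: "s b (x p) \<in> V p" for b p using vs.subspace_scale[OF sub xVp] .
  have L0: "b = 0" if "s b (x q) \<in> N q" for b q
  proof -
    have "s b (x q) \<in> L q" unfolding L_def by (rule rangeI)
    hence "s b (x q) = 0" using NL[of q] that by blast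
    thus ?thesis using xnz by simp
  qed
  have sumV: "{u + w | u w. u \<in> L p \<and> w \<in> N p} = V p" for p
  proof (rule set_eqI, rule iffI)
    fix y assume "y \<in> {u + w | u w. u \<in> L p \<and> w \<in> N p}"
    then obtain u w where "y = u + w" "u \<in> L p" "w \<in> N p" by blast
    thus "y \<in> V p" using sxV NV vs.subspace_add[OF sub] unfolding L_def by blast
  next
    fix y assume yV: "y \<in> V p"
    show "y \<in> {u + w | u w. u \<in> L p \<and> w \<in> N p}"
    proof (rule ccontr)
      assume ny: "y \<notin> {u + w | u w. u \<in> L p \<and> w \<in> N p}"
      define P where "P b \<longleftrightarrow> (\<exists>q. p \<le> q \<and> f p q y + s b (x q) \<in> N q)" for b
      have tr: "f p r y + s b (x r) \<in> N r" if "p \<le> q" "q \<le> r" "f p q y + s b (x q) \<in> N q" for q r b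
      proof -
        have "f q r (f p q y + s b (x q)) \<in> N r" using Nf[OF that(2) that(3)] .
        moreover have "f q r (f p q y + s b (x q)) = f p r y + s b (x r)"
          using fadd[OF that(2) maps[OF that(1) yV] sxV] fcomp[OF that(1,2) yV]
            fscale[OF that(2) xVp] xc that(2) by simp
        ultimately show ?thesis by simp
      qed
      have uniq: "b1 = b2" if P1: "P b1" and P2: "P b2" for b1 b2
      proof -
        obtain q1 where q1: "p \<le> q1" "f p q1 y + s b1 (x q1) \<in> N q1" using P1 unfolding P_def by blast
        obtain q2 where q2: "p \<le> q2" "f p q2 y + s b2 (x q2) \<in> N q2" using P2 unfolding P_def by blast
        obtain r where r: "q1 \<le> r" "q2 \<le> r" using dir unfolding directed_def by blast
        have "(f p r y + s b1 (x r)) - (f p r y + s b2 (x r)) \<in> N r"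
          using vs.subspace_diff[OF Ns tr[OF q1(1) r(1) q1(2)] tr[OF q2(1) r(2) q2(2)]] .
        moreover have "(f p r y + s b1 (x r)) - (f p r y + s b2 (x r)) = s (b1 - b2) (x r)"
          by (simp add: vs.scale_left_diff_distrib)
        ultimately have "s (b1 - b2) (x r) \<in> N r" by metis
        hence "b1 - b2 = 0" by (rule L0)
        thus ?thesis by simp
      qed
      define b0 where "b0 = (if Ex P then (SOME b. P b) else 0)"
      define y' where "y' = y + s b0 (x p)"
      have y'V: "y' \<in> V p" unfolding y'_def using vs.subspace_add[OF sub yV sxV] .
      have fy': "f p q y' = f p q y + s b0 (x q)" if "p \<le> q" for q
        unfolding y'_def using fadd[OF that yV sxV] fscale[OF that xVp] xc that by simp
      have claim: "b = 0" if "p \<le> q" "f p q y' + s b (x q) \<in> N q" for q b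
      proof -
        have "f p q y + s (b0 + b) (x q) = f p q y' + s b (x q)"
          using fy'[OF that(1)] by (simp add: vs.scale_left_distrib add.assoc)
        hence Pb: "P (b0 + b)" unfolding P_def using that by auto
        hence "P b0" unfolding b0_def using someI by (metis (mono_tags))
        hence "b0 = b0 + b" using uniq Pb by blast
        thus ?thesis by simp
      qed
      have y'N: "y' \<notin> N p"
      proof
        assume "y' \<in> N p"
        moreover have "s (- b0) (x p) \<in> L p" unfolding L_def by (rule rangeI)
        moreover have "y = s (- b0) (x p) + y'" unfolding y'_def by simp
        ultimately show False using ny by blast
      qed
      define G' where "G' = M \<union> {(q, n + s a (f p q y')) | q a n. p \<le> q \<and> n \<in> N q}"
      have NG0: "Nof G' q = N q \<union> {w. \<exists>a n. w = n + s a (f p q y') \<and> p \<le> q \<and> n \<in> N q}" for q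
        unfolding Nof_def G'_def N_def by blast
      have NG: "Nof G' q = (if p \<le> q then {n + s a (f p q y') | a n. n \<in> N q} else N q)" for q
      proof (cases "p \<le> q")
        case True
        have "N q \<subseteq> {n + s a (f p q y') | a n. n \<in> N q}"
        proof
          fix w assume "w \<in> N q"
          moreover have "w = w + s 0 (f p q y')" by simp
          ultimately show "w \<in> {n + s a (f p q y') | a n. n \<in> N q}" by blast
        qed
        thus ?thesis unfolding NG0 using True by auto
      next
        case False
        thus ?thesis unfolding NG0 by auto
      qed
      have NinG: "N q \<subseteq> Nof G' q" for q unfolding NG0 by blast
      have G'A: "G' \<in> A" unfolding A_def mem_Collect_eq psubmod_def
      proof (intro conjI allI impI)
        fix q
        show "vs.subspace (Nof G' q)"
          unfolding NG using vs.subspace_plus_line[OF Ns] Ns by simp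
        show "Nof G' q \<subseteq> V q"
        proof (cases "p \<le> q")
          case True
          have "n + s a (f p q y') \<in> V q" if "n \<in> N q" for a n
            using vs.subspace_add[OF sub _ vs.subspace_scale[OF sub maps[OF True y'V]]] NV that by blast
          thus ?thesis unfolding NG using True by auto
        next
          case False thus ?thesis unfolding NG using NV by simp
        qed
        show "Nof G' q \<inter> range (\<lambda>a. s a (x q)) = {0}"
        proof
          show "{0} \<subseteq> Nof G' q \<inter> range (\<lambda>a. s a (x q))"
            using NinG vs.subspace_0[OF Ns] vs.scale_zero_left by (metis Int_iff empty_subsetI insert_subset rangeI subsetD)
          show "Nof G' q \<inter> range (\<lambda>a. s a (x q)) \<subseteq> {0}"
          proof
            fix w assume w: "w \<in> Nof G' q \<inter> range (\<lambda>a. s a (x q))"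
            then obtain b where wb: "w = s b (x q)" by blast
            show "w \<in> {0}"
            proof (cases "p \<le> q")
              case False
              hence "w \<in> N q" using w unfolding NG by simp
              thus ?thesis using L0 wb by simp
            next
              case True
              then obtain a n where an: "w = n + s a (f p q y')" "n \<in> N q" using w unfolding NG by auto
              show ?thesis
              proof (cases "a = 0")
                case True
                hence "w \<in> N q" using an by simp
                thus ?thesis using L0 wb by simp
              next
                case False
                have "s (inverse a) w = s (inverse a) n + f p q y'"
                  using an False by (simp add: vs.scale_right_distrib)
                hence "f p q y' + s (- (inverse a * b)) (x q) = s (- inverse a) n"
                  using wb by (simp add: algebra_simps)
                moreover have "s (- inverse a) n \<in> N q" using vs.subspace_scale[OF Ns an(2)] .
                ultimately have "f p q y' + s (- (inverse a * b)) (x q) \<in> N q" by metis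
                hence "- (inverse a * b) = 0" by (rule claim[OF True])
                hence "b = 0" using False by simp
                thus ?thesis using wb by simp
              qed
            qed
          qed
        qed
      next
        fix q r :: 'p assume qr: "q \<le> r"
        show "f q r ` Nof G' q \<subseteq> Nof G' r"
        proof
          fix w assume "w \<in> f q r ` Nof G' q"
          then obtain u where u: "u \<in> Nof G' q" "w = f q r u" by blast
          show "w \<in> Nof G' r"
          proof (cases "p \<le> q")
            case True
            then obtain a n where an: "u = n + s a (f p q y')" "n \<in> N q" using u unfolding NG by auto
            have pr: "p \<le> r" using True qr by auto
            have "w = f q r n + s a (f p r y')"
              using an u fadd[OF qr _ vs.subspace_scale[OF sub maps[OF True y'V]]] NV
                fscale[OF qr maps[OF True y'V]] fcomp[OF True qr y'V] by auto
            moreover have "f q r n \<in> N r" using Nf[OF qr an(2)] .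
            ultimately show ?thesis unfolding NG using pr by auto
          next
            case False
            hence "u \<in> N q" using u unfolding NG by simp
            thus ?thesis using Nf[OF qr] NinG u by blast
          qed
        qed
      qed
      have "M \<subseteq> G'" unfolding G'_def by blast
      hence "G' = M" using Mmax[OF G'A] by simp
      moreover have "y' \<in> Nof G' p"
      proof -
        have "y' = 0 + s 1 (f p p y')" using fid[OF y'V] by simp
        hence "y' \<in> {n + s a (f p p y') | a n. n \<in> N p}" using vs.subspace_0[OF Ns] by blast
        thus ?thesis unfolding NG by simp
      qed
      ultimately show False using y'N unfolding N_def by simp
    qed
  qed
  show ?thesis unfolding pdirect_summand_def
  proof (intro conjI exI[of _ N] allI)
    show "psubmod s V f (\<lambda>p. range (\<lambda>a. s a (x p)))" using Lsubmod[OF xV xc] .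
    show "psubmod s V f N" by (rule Nsub)
    fix p
    show "range (\<lambda>a. s a (x p)) \<inter> N p = {0}" using NL[of p] unfolding L_def by blast
    show "{u + w |u w. u \<in> range (\<lambda>a. s a (x p)) \<and> w \<in> N p} = V p" using sumV[of p] unfolding L_def .
  qed
qed

end

theorem lemma2p2:
  fixes s :: "'k::field \<Rightarrow> 'v::ab_group_add \<Rightarrow> 'v"
    and V :: "'p::order \<Rightarrow> 'v set"
    and f :: "'p \<Rightarrow> 'p \<Rightarrow> 'v \<Rightarrow> 'v"
  assumes "codirected TYPE('p)"
    and "pmod s V f"
    and "pfd s V"
    and "\<forall>p. V p \<noteq> {0}"
    and "\<forall>p q. p \<le> q \<longrightarrow> inj_on (f p q) (V p)"
  shows "(\<exists>\<eta>. pmono (*) kP_space kP_map s V f \<eta>)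
    \<and> (directed TYPE('p) \<longrightarrow>
         (\<exists>L. pdirect_summand s V f L \<and> (\<exists>\<eta>. piso (*) kP_space kP_map s L f \<eta>)))"
proof -
  obtain x where xV: "\<forall>p. x p \<in> V p \<and> x p \<noteq> 0" and xc: "\<forall>p q. p \<le> q \<longrightarrow> f p q (x p) = x q"
    using exists_family[OF assms] by blast
  show ?thesis
    using part1[OF assms xV xc] part2[OF assms xV xc] Liso[OF assms xV xc] by blast
qed

end
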